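(* Let $r\ge2$ and let $0^r$ denote the consecutive pattern consisting of $r$ zeros. Then $|\mathbf{I}_n(0^r)|=n!$ for $1\le n<r$, and for $n\ge r$, $$|\mathbf{I}_n(0^r)|=\sum_{j=1}^{r-1}(n-j)\,|\mathbf{I}_{n-j}(0^r)|.$$
   Context: An inversion sequence of length $n$ is an integer sequence $e=e_1\dots e_n$ with $0\le e_i<i$ for all $i$; $\mathbf{I}_n$ denotes the set of these. $e$ avoids the consecutive pattern $0^r$ if there is no $i$ with $e_i=e_{i+1}=\dots=e_{i+r-1}$; $\mathbf{I}_n(0^r)$ is the set of $e\in\mathbf{I}_n$ avoiding $0^r$. *)

theory Defs
  imports Main
begin

text \<open>Inversion sequences of length n, as lists e with e!i < i+1 (0-indexed,
  i.e. 0 \<le> e_{i+1} < i+1 in the paper's 1-indexed convention).\<close>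
definition inv_seqs :: "nat \<Rightarrow> nat list set" where
  "inv_seqs n = {e. length e = n \<and> (\<forall>i<n. e ! i < Suc i)}"

text \<open>e contains the consecutive pattern 0^r: r consecutive equal entries.\<close>
definition contains_const_run :: "nat \<Rightarrow> nat list \<Rightarrow> bool" where
  "contains_const_run r e \<longleftrightarrow>
     (\<exists>i. i + r \<le> length e \<and> (\<forall>k<r. e ! (i + k) = e ! i))"

definition inv_seqs_avoid :: "nat \<Rightarrow> nat \<Rightarrow> nat list set" where
  "inv_seqs_avoid r n = {e \<in> inv_seqs n. \<not> contains_const_run r e}"

end

theory Submission
  imports Defs
begin

lemma inv_seqs_finite: "finite (inv_seqs n)"
proof -
  have "inv_seqs n \<subseteq> {xs. set xs \<subseteq> {..<n} \<and> length xs = n}"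
    by (auto simp: inv_seqs_def in_set_conv_nth) (metis less_trans_Suc not_less_eq)
  then show ?thesis using finite_lists_length_eq[of "{..<n}" n] finite_subset by blast
qed

lemma inv_seqs_Suc: "inv_seqs (Suc n) = (\<lambda>(p,v). p @ [v]) ` (inv_seqs n \<times> {..<Suc n})"
proof
  show "(\<lambda>(p,v). p @ [v]) ` (inv_seqs n \<times> {..<Suc n}) \<subseteq> inv_seqs (Suc n)"
    by (auto simp: inv_seqs_def nth_append less_Suc_eq)
next
  show "inv_seqs (Suc n) \<subseteq> (\<lambda>(p,v). p @ [v]) ` (inv_seqs n \<times> {..<Suc n})"
  proof
    fix e assume e: "e \<in> inv_seqs (Suc n)"
    then have "e \<noteq> []" by (auto simp: inv_seqs_def)
    then obtain p v where pv: "e = p @ [v]" by (metis rev_exhaust)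
    have len: "length p = n" using e unfolding pv inv_seqs_def by simp
    have all: "\<forall>i<Suc n. e ! i < Suc i" using e unfolding inv_seqs_def by simp
    have "p \<in> inv_seqs n" unfolding inv_seqs_def
    proof (intro CollectI conjI allI impI)
      fix i assume "i < n"
      then show "p ! i < Suc i" using all[rule_format, of i] len by (simp add: pv nth_append)
    qed (rule len)
    moreover have "v < Suc n" using all[rule_format, of n] len[symmetric] by (simp add: pv)
    ultimately show "e \<in> (\<lambda>(p,v). p @ [v]) ` (inv_seqs n \<times> {..<Suc n})"
      using pv by force
  qed
qed

lemma card_inv_seqs: "card (inv_seqs n) = fact n"
proof (induction n)
  case 0
  have "inv_seqs 0 = {[]}" by (auto simp: inv_seqs_def)
  then show ?case by simp
next
  case (Suc n)
  have inj: "inj_on (\<lambda>(p,v). p @ [v]) (inv_seqs n \<times> {..<Suc n})"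
    by (auto simp: inj_on_def)
  have "card (inv_seqs (Suc n)) = card (inv_seqs n \<times> {..<Suc n})"
    unfolding inv_seqs_Suc using card_image[OF inj] by simp
  also have "\<dots> = fact n * Suc n" using Suc by (simp add: card_cartesian_product)
  finally show ?case by simp
qed

lemma avoid_finite: "finite (inv_seqs_avoid r n)"
  unfolding inv_seqs_avoid_def using inv_seqs_finite by simp

lemma avoid_small: "n < r \<Longrightarrow> inv_seqs_avoid r n = inv_seqs n"
  by (auto simp: inv_seqs_avoid_def contains_const_run_def inv_seqs_def)

lemma build_in:
  assumes r2: "2 \<le> r" and j: "1 \<le> j" "j \<le> r - 1" and nr: "r \<le> n"
    and p: "p \<in> inv_seqs_avoid r (n - j)" and v: "v < Suc (n - j)" "v \<noteq> last p"
  shows "p @ replicate j v \<in> inv_seqs_avoid r n"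
proof -
  define m where "m = n - j"
  have m1: "1 \<le> m" and nm: "n = m + j" using j nr r2 unfolding m_def by auto
  have lenp: "length p = m" using p unfolding inv_seqs_avoid_def inv_seqs_def m_def by simp
  have pinv: "\<forall>i<m. p ! i < Suc i" using p unfolding inv_seqs_avoid_def inv_seqs_def m_def by simp
  have pav: "\<not> contains_const_run r p" using p unfolding inv_seqs_avoid_def by simp
  define e where "e = p @ replicate j v"
  have elo: "e ! i = p ! i" if "i < m" for i using that lenp by (simp add: e_def nth_append)
  have ehi: "e ! i = v" if "m \<le> i" "i < n" for i using that lenp nm by (simp add: e_def nth_append)
  have lastp: "last p = p ! (m - 1)" using lenp m1 by (metis last_conv_nth list.size(3) not_one_le_zero)
  have leng: "length e = n" using lenp nm by (simp add: e_def)
  have "e \<in> inv_seqs n" unfolding inv_seqs_def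
  proof (intro CollectI conjI allI impI)
    fix i assume i: "i < n"
    show "e ! i < Suc i"
    proof (cases "i < m")
      case True then show ?thesis using elo pinv by simp
    next
      case False then show ?thesis using ehi[of i] i v unfolding m_def by simp
    qed
  qed (rule leng)
  moreover have "\<not> contains_const_run r e"
  proof
    assume "contains_const_run r e"
    then obtain i where i: "i + r \<le> n" and run: "\<forall>k<r. e ! (i + k) = e ! i"
      unfolding contains_const_run_def leng by blast
    show False
    proof (cases "i + r \<le> m")
      case True
      have "\<forall>k<r. p ! (i + k) = p ! i"
      proof (intro allI impI)
        fix k assume "k < r"
        then show "p ! (i + k) = p ! i" using run True elo[of "i+k"] elo[of i] r2 by force
      qed
      then have "contains_const_run r p" unfolding contains_const_run_def using True lenp by blast
      then show False using pav by simp
    next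
      case False
      have im: "i < m" using False i nm j by (cases "i < m") auto
      have a: "e ! (m - 1) = e ! i" using run[rule_format, of "m - 1 - i"] False im by simp
      have b: "e ! m = e ! i" using run[rule_format, of "m - i"] False im by simp
      have "e ! (m - 1) = last p" using elo[of "m-1"] lastp m1 by simp
      moreover have "e ! m = v" using ehi[of m] nm j by simp
      ultimately show False using a b im v(2) by simp
    qed
  qed
  ultimately show ?thesis unfolding e_def inv_seqs_avoid_def by simp
qed


lemma decomp:
  assumes r2: "2 \<le> r" and nr: "r \<le> n" and e: "e \<in> inv_seqs_avoid r n"
  shows "\<exists>j\<in>{1..r-1}. \<exists>p v. p \<in> inv_seqs_avoid r (n - j) \<and> v < Suc (n - j)
            \<and> v \<noteq> last p \<and> e = p @ replicate j v"
proof -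
  have lene: "length e = n" using e unfolding inv_seqs_avoid_def inv_seqs_def by simp
  have einv: "\<forall>i<n. e ! i < Suc i" using e unfolding inv_seqs_avoid_def inv_seqs_def by simp
  have eav: "\<not> contains_const_run r e" using e unfolding inv_seqs_avoid_def by simp
  define v where "v = e ! (n - 1)"
  define P where "P k \<longleftrightarrow> k < n \<and> e ! (n - 1 - k) \<noteq> v" for k
  have ex: "\<exists>k\<le>r-1. P k"
  proof (rule ccontr)
    assume "\<not> ?thesis"
    then have allv: "\<forall>k\<le>r-1. e ! (n - 1 - k) = v" using nr r2 unfolding P_def by auto
    have "\<forall>k<r. e ! (n - r + k) = e ! (n - r)"
    proof (intro allI impI)
      fix k assume k: "k < r"
      have "e ! (n - r + k) = v" using allv[rule_format, of "r - 1 - k"] k nr r2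
        by (simp add: Suc_diff_le diff_diff_left)
      moreover have "e ! (n - r) = v" using allv[rule_format, of "r - 1"] nr r2
        by (simp add: Suc_diff_le diff_diff_left)
      ultimately show "e ! (n - r + k) = e ! (n - r)" by simp
    qed
    then have "contains_const_run r e" unfolding contains_const_run_def lene using nr
      by (intro exI[of _ "n - r"]) simp
    then show False using eav by simp
  qed
  define j where "j = (LEAST k. P k)"
  have Pj: "P j" unfolding j_def using ex by (metis LeastI)
  have jle: "j \<le> r - 1" using ex unfolding j_def by (meson Least_le le_trans)
  have below: "\<And>k. k < j \<Longrightarrow> \<not> P k" unfolding j_def by (rule not_less_Least)
  have j0: "j \<noteq> 0"
  proof
    assume "j = 0" then show False using Pj unfolding P_def v_def by simp
  qed
  have jn: "j < n" using Pj unfolding P_def by simp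
  define m where "m = n - j"
  define p where "p = take m e"
  have lenp: "length p = m" unfolding p_def m_def using lene jn by simp
  have pe: "p ! i = e ! i" if "i < m" for i using that unfolding p_def by simp
  have ehi: "e ! i = v" if "m \<le> i" "i < n" for i
  proof -
    have "n - 1 - i < j" using that jn unfolding m_def by linarith
    then have "\<not> P (n - 1 - i)" by (rule below)
    then show ?thesis using that unfolding P_def by (simp add: Suc_diff_le diff_diff_left)
  qed
  have m1: "1 \<le> m" unfolding m_def using jn by simp
  have lastp: "last p = e ! (m - 1)"
  proof -
    have "last p = p ! (m - 1)" using lenp m1 by (metis last_conv_nth list.size(3) not_one_le_zero)
    then show ?thesis using pe[of "m - 1"] m1 by simp
  qed
  have "e ! (m - 1) \<noteq> v" using Pj unfolding P_def m_def
    by (metis diff_diff_left add.commute)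
  then have vl: "v \<noteq> last p" using lastp by simp
  have vm: "v < Suc m" using ehi[of m] einv[rule_format, of m] jn j0 unfolding m_def by simp
  have eq: "e = p @ replicate j v"
  proof (rule nth_equalityI)
    show "length e = length (p @ replicate j v)" using lene lenp jn unfolding m_def by simp
  next
    fix i assume "i < length e"
    then show "e ! i = (p @ replicate j v) ! i" using lenp lene pe ehi jn unfolding m_def
      by (auto simp: nth_append)
  qed
  have "p \<in> inv_seqs m" unfolding inv_seqs_def using lenp pe einv jn unfolding m_def by auto
  moreover have "\<not> contains_const_run r p"
  proof
    assume "contains_const_run r p"
    then obtain i where i: "i + r \<le> m" and run: "\<forall>k<r. p ! (i + k) = p ! i"
      unfolding contains_const_run_def lenp by blast
    have "\<forall>k<r. e ! (i + k) = e ! i"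
    proof (intro allI impI)
      fix k assume "k < r"
      then show "e ! (i + k) = e ! i" using run pe[of "i + k"] pe[of i] i r2 by force
    qed
    then have "contains_const_run r e" unfolding contains_const_run_def lene using i
      unfolding m_def by (intro exI[of _ i]) simp
    then show False using eav by simp
  qed
  ultimately have "p \<in> inv_seqs_avoid r m" unfolding inv_seqs_avoid_def by simp
  then show ?thesis using jle j0 vl vm eq unfolding m_def by (intro bexI[of _ j]) auto
qed


lemma disj:
  assumes j: "0 < j" "j < j'" "j' < n" and p: "length p = n - j" and p': "length p' = n - j'"
    and pn: "p \<noteq> []" and vl: "v \<noteq> last p"
    and eq: "p @ replicate j v = p' @ replicate j' v'"
  shows False
proof -
  have a1: "n - 1 - j < n - j" "\<not> n - 1 - j < n - j'" "n - 1 - j - (n - j') < j'"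
     "\<not> n - 1 < n - j" "n - 1 - (n - j) < j" "\<not> n - 1 < n - j'" "n - 1 - (n - j') < j'"
    using j by linarith+
  have "(p @ replicate j v) ! (n - 1 - j) = last p"
    using p pn j a1 by (simp add: nth_append last_conv_nth)
  moreover have "(p' @ replicate j' v') ! (n - 1 - j) = v'"
    using p' j a1 by (simp add: nth_append)
  moreover have "(p @ replicate j v) ! (n - 1) = v"
    using p j a1 by (simp add: nth_append)
  moreover have "(p' @ replicate j' v') ! (n - 1) = v'"
    using p' j a1 by (simp add: nth_append)
  ultimately show False using eq vl by simp
qed

theorem mainTheorem8:
  fixes r :: nat
  assumes "r \<ge> 2"
  shows "(\<forall>n. 1 \<le> n \<and> n < r \<longrightarrow> card (inv_seqs_avoid r n) = fact n)
       \<and> (\<forall>n\<ge>r. card (inv_seqs_avoid r n) =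
              (\<Sum>j=1..r-1. (n - j) * card (inv_seqs_avoid r (n - j))))"
proof (intro conjI allI impI)
  fix n assume "1 \<le> n \<and> n < r"
  then show "card (inv_seqs_avoid r n) = fact n" using avoid_small card_inv_seqs by simp
next
  fix n assume nr: "r \<le> n"
  define S where "S j = Sigma (inv_seqs_avoid r (n - j)) (\<lambda>p. {v. v < Suc (n - j) \<and> v \<noteq> last p})" for j
  define g where "g j = (\<lambda>(p, v). p @ replicate j (v::nat))" for j
  have lenA: "length p = k" if "p \<in> inv_seqs_avoid r k" for p k
    using that unfolding inv_seqs_avoid_def inv_seqs_def by simp
  have U: "inv_seqs_avoid r n = (\<Union>j\<in>{1..r-1}. g j ` S j)"
  proof
    show "inv_seqs_avoid r n \<subseteq> (\<Union>j\<in>{1..r-1}. g j ` S j)"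
    proof
      fix e assume "e \<in> inv_seqs_avoid r n"
      from decomp[OF assms nr this] obtain j p v where "j \<in> {1..r-1}"
        "p \<in> inv_seqs_avoid r (n - j)" "v < Suc (n - j)" "v \<noteq> last p" "e = p @ replicate j v"
        by blast
      then show "e \<in> (\<Union>j\<in>{1..r-1}. g j ` S j)" unfolding S_def g_def
        by (intro UN_I[of j]) (auto intro!: image_eqI[of _ _ "(p, v)"])
    qed
  next
    show "(\<Union>j\<in>{1..r-1}. g j ` S j) \<subseteq> inv_seqs_avoid r n"
      using build_in[OF assms _ _ nr] unfolding S_def g_def by auto
  qed
  have finS: "finite (S j)" for j unfolding S_def using avoid_finite by auto
  have cardS: "card (S j) = (n - j) * card (inv_seqs_avoid r (n - j))" if j: "j \<in> {1..r-1}" for j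
  proof -
    have "card (S j) = (\<Sum>p\<in>inv_seqs_avoid r (n - j). card {v. v < Suc (n - j) \<and> v \<noteq> last p})"
      unfolding S_def using avoid_finite by (intro card_SigmaI) auto
    also have "\<dots> = (\<Sum>p\<in>inv_seqs_avoid r (n - j). n - j)"
    proof (rule sum.cong[OF refl])
      fix p assume p: "p \<in> inv_seqs_avoid r (n - j)"
      have lp: "length p = n - j" using lenA[OF p] .
      have nj: "1 \<le> n - j" using j nr by auto
      have "last p = p ! (n - j - 1)" using lp nj by (metis last_conv_nth list.size(3) not_one_le_zero)
      moreover have "p ! (n - j - 1) < Suc (n - j - 1)" using p nj
        unfolding inv_seqs_avoid_def inv_seqs_def by auto
      ultimately have lt: "last p < Suc (n - j)" by simp
      have "{v. v < Suc (n - j) \<and> v \<noteq> last p} = {..<Suc (n - j)} - {last p}" by auto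
      then show "card {v. v < Suc (n - j) \<and> v \<noteq> last p} = n - j" using lt by simp
    qed
    also have "\<dots> = (n - j) * card (inv_seqs_avoid r (n - j))" by simp
    finally show ?thesis .
  qed
  have injg: "inj_on (g j) (S j)" if "j \<in> {1..r-1}" for j
  proof (rule inj_onI)
    fix x y assume x: "x \<in> S j" and y: "y \<in> S j" and e: "g j x = g j y"
    obtain p v where xp: "x = (p, v)" by fastforce
    obtain p' v' where yp: "y = (p', v')" by fastforce
    have "length p = length p'" using x y lenA unfolding xp yp S_def by auto
    then have "p = p' \<and> replicate j v = replicate j v'" using e unfolding xp yp g_def by simp
    then show "x = y" using that unfolding xp yp by (simp add: replicate_eq_replicate)
  qed
  have "card (inv_seqs_avoid r n) = (\<Sum>j\<in>{1..r-1}. card (g j ` S j))"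
    unfolding U
  proof (rule card_UN_disjoint)
    show "\<forall>i\<in>{1..r - 1}. \<forall>j\<in>{1..r - 1}. i \<noteq> j \<longrightarrow> g i ` S i \<inter> g j ` S j = {}"
    proof (intro ballI impI)
      fix i j assume i: "i \<in> {1..r-1}" and j: "j \<in> {1..r-1}" and ij: "i \<noteq> j"
      have D: "False" if ab: "a \<in> {1..r-1}" "b \<in> {1..r-1}" "a < b" "x \<in> g a ` S a" "x \<in> g b ` S b" for a b x
      proof -
        obtain p v where "(p, v) \<in> S a" "x = p @ replicate a v" using ab(4) unfolding g_def by auto
        moreover obtain p' v' where "(p', v') \<in> S b" "x = p' @ replicate b v'" using ab(5) unfolding g_def by auto
        ultimately have pS: "p \<in> inv_seqs_avoid r (n - a)" "v \<noteq> last p"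
            and p'S: "p' \<in> inv_seqs_avoid r (n - b)" and xx: "p @ replicate a v = p' @ replicate b v'"
          unfolding S_def by auto
        have bn: "b < n" using ab(2) nr by auto
        have lp: "length p = n - a" by (rule lenA[OF pS(1)])
        have "p \<noteq> []" using lp ab(3) bn by auto
        then show False using disj[OF _ ab(3) bn lp lenA[OF p'S] _ pS(2) xx] ab(1) by auto
      qed
      show "g i ` S i \<inter> g j ` S j = {}"
      proof (cases "i < j")
        case True then show ?thesis using D[OF i j] by blast
      next
        case False then have "j < i" using ij by simp
        then show ?thesis using D[OF j i] by blast
      qed
    qed
  qed (use finS in auto)
  also have "\<dots> = (\<Sum>j=1..r-1. (n - j) * card (inv_seqs_avoid r (n - j)))"
    by (rule sum.cong[OF refl]) (simp add: card_image injg cardS)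
  finally show "card (inv_seqs_avoid r n) = (\<Sum>j=1..r-1. (n - j) * card (inv_seqs_avoid r (n - j)))" .
qed

end
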